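(* Let $\alpha,\beta\in\mathbb{R}$ and let $m\ge 0$ be an integer. Let $b_0,\dots,b_m$ be the unique solution of the lower-triangular system $$\sum_{k=0}^{i}\frac{(-1)^{i-k}}{i-k+1}\,b_k=\frac{(-1)^{i+1}}{i+2}-\binom{-\alpha}{i+1},\qquad i=0,1,\dots,m,$$ and let $b'_0,\dots,b'_m$ be the unique solution of the same system with $\alpha$ replaced by $\beta$. Define $$c_i=\sum_{k=i}^{m}\binom{k}{i}(-1)^{k-i}\,b_k,\qquad d_i=\sum_{k=i}^{m}\binom{k}{i}(-1)^{k-i}\,b'_k,\qquad i=0,\dots,m.$$ Then for every integer $n\ge 0$, every $h>0$, and every real polynomial $f$ of degree at most $m$, $$\int_{-\alpha h}^{(n+\beta)h} f(t)\,dt \;=\; h\sum_{i=0}^{n} f(ih)\;+\;h\sum_{i=0}^{m} c_i\, f(ih)\;+\;h\sum_{i=0}^{m} d_i\, f\big((n-i)h\big).$$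
   Context: For real $x$ and integer $j\ge 0$, $\binom{x}{j}$ denotes the generalized binomial coefficient $x(x-1)\cdots(x-j+1)/j!$ (with $\binom{x}{0}=1$). The integral limits are oriented, so for negative $\alpha$ or $\beta$ the nodes $ih$ may lie outside the range of integration, and when $m>n$ some nodes $ih$ or $(n-i)h$ lie outside $[0,nh]$; the formula is to be read literally with the integrand evaluated at those points. In the system for $b_k$, the coefficient of $b_i$ in the $i$-th equation is $1$, so the system is uniquely solvable by forward substitution. *)

theory Defs
  imports "HOL-Analysis.Analysis" "HOL-Computational_Algebra.Polynomial"
begin

definition oriented_integral :: "real \<Rightarrow> real \<Rightarrow> (real \<Rightarrow> real) \<Rightarrow> real" where
  "oriented_integral a b f = (if a \<le> b then integral {a..b} f else - integral {b..a} f)"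

definition solves_system :: "real \<Rightarrow> nat \<Rightarrow> (nat \<Rightarrow> real) \<Rightarrow> bool" where
  "solves_system \<alpha> m b \<longleftrightarrow>
     (\<forall>i\<le>m. (\<Sum>k=0..i. (-1) ^ (i - k) / real (i - k + 1) * b k)
              = (-1) ^ (i + 1) / real (i + 2) - ((-\<alpha>) gchoose (i + 1)))"

end

theory Submission
  imports Defs
begin

definition fdp :: "real \<Rightarrow> real poly \<Rightarrow> real poly" where
  "fdp h p = p \<circ>\<^sub>p [:h, 1:] - p"

lemma poly_fdp: "poly (fdp h p) x = poly p (x + h) - poly p x"
  by (simp add: fdp_def poly_pcompose algebra_simps)

lemma poly_fdp_Suc: "poly ((fdp h ^^ Suc j) p) x = poly ((fdp h ^^ j) p) (x + h) - poly ((fdp h ^^ j) p) x"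
  by (simp add: poly_fdp)

lemma fdp_add: "fdp h (p + q) = fdp h p + fdp h q"
  by (simp add: fdp_def pcompose_add)

lemma fdp_minus: "fdp h (- p) = - fdp h p"
  by (simp add: fdp_def pcompose_uminus)

lemma fdp_smult: "fdp h (smult a p) = smult a (fdp h p)"
  by (simp add: fdp_def pcompose_smult smult_diff_right)

lemma fdp_const: "fdp h [:a:] = 0"
  by (simp add: fdp_def)

lemma fdp_zero: "fdp h 0 = 0"
  by (simp add: fdp_def)

lemma fdp_pow_zero: "(fdp h ^^ j) 0 = 0"
  by (induction j) (auto simp: fdp_zero)

lemma fdp_pow_add: "(fdp h ^^ j) (p + q) = (fdp h ^^ j) p + (fdp h ^^ j) q"
  by (induction j) (auto simp: fdp_add)

lemma fdp_pow_minus: "(fdp h ^^ j) (- p) = - (fdp h ^^ j) p"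
  by (induction j) (auto simp: fdp_minus)

lemma fdp_pow_smult: "(fdp h ^^ j) (smult a p) = smult a ((fdp h ^^ j) p)"
  by (induction j) (auto simp: fdp_smult)

lemma fdp_pow_sum: "(fdp h ^^ j) (sum f A) = (\<Sum>x\<in>A. (fdp h ^^ j) (f x))"
  by (induction A rule: infinite_finite_induct) (auto simp: fdp_pow_zero fdp_pow_add)

lemma fdp_pow_const: "(fdp h ^^ Suc j) [:a:] = 0"
  by (induction j) (auto simp: fdp_const fdp_zero)

lemma degree_fdp: "degree (fdp h p) \<le> degree p"
proof -
  have "degree (p \<circ>\<^sub>p [:h, 1:]) = degree p" by (simp add: degree_pcompose)
  then show ?thesis unfolding fdp_def by (metis degree_diff_le_max max.idem)
qed

lemma degree_fdp_pow: "degree ((fdp h ^^ j) p) \<le> degree p"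
  by (induction j) (auto intro: order_trans[OF degree_fdp])

lemma pderiv_fdp: "pderiv (fdp h p) = fdp h (pderiv p)"
  by (simp add: fdp_def pderiv_diff pderiv_pcompose pderiv_pCons)

lemma pderiv_fdp_pow: "pderiv ((fdp h ^^ j) p) = (fdp h ^^ j) (pderiv p)"
  by (induction j) (auto simp: pderiv_fdp)

lemma leibniz:
  "poly ((fdp h ^^ j) (pCons 0 q)) y
     = y * poly ((fdp h ^^ j) q) y + real j * h * poly ((fdp h ^^ (j - 1)) q) (y + h)"
proof (induction j arbitrary: y)
  case 0
  then show ?case by simp
next
  case (Suc j)
  have e: "real j * h * poly ((fdp h ^^ (j - 1)) q) (y + h + h) - real j * h * poly ((fdp h ^^ (j - 1)) q) (y + h)
      = real j * h * poly ((fdp h ^^ j) q) (y + h)"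
  proof (cases j)
    case 0 then show ?thesis by simp
  next
    case (Suc j')
    then show ?thesis by (simp add: poly_fdp algebra_simps)
  qed
  have "poly ((fdp h ^^ Suc j) (pCons 0 q)) y = poly ((fdp h ^^ j) (pCons 0 q)) (y + h) - poly ((fdp h ^^ j) (pCons 0 q)) y"
    by (rule poly_fdp_Suc)
  also have "\<dots> = (y + h) * poly ((fdp h ^^ j) q) (y + h) + real j * h * poly ((fdp h ^^ (j - 1)) q) (y + h + h)
       - (y * poly ((fdp h ^^ j) q) y + real j * h * poly ((fdp h ^^ (j - 1)) q) (y + h))"
    using Suc by simp
  also have "\<dots> = y * (poly ((fdp h ^^ j) q) (y + h) - poly ((fdp h ^^ j) q) y) + h * poly ((fdp h ^^ j) q) (y + h)
      + (real j * h * poly ((fdp h ^^ (j - 1)) q) (y + h + h) - real j * h * poly ((fdp h ^^ (j - 1)) q) (y + h))"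
    by (simp add: algebra_simps)
  also have "\<dots> = y * poly ((fdp h ^^ Suc j) q) y + real (Suc j) * h * poly ((fdp h ^^ (Suc j - 1)) q) (y + h)"
    by (simp only: e poly_fdp_Suc[symmetric]) (simp add: algebra_simps)
  finally show ?case .
qed

lemma pCons_split: "pCons a q = [:a:] + pCons 0 q"
  by simp

lemma poly_fdp_pow_pCons:
  "poly ((fdp h ^^ j) (pCons a q)) y
     = (if j = 0 then a else 0) + y * poly ((fdp h ^^ j) q) y + real j * h * poly ((fdp h ^^ (j - 1)) q) (y + h)"
proof -
  have "poly ((fdp h ^^ j) (pCons a q)) y = poly ((fdp h ^^ j) [:a:]) y + poly ((fdp h ^^ j) (pCons 0 q)) y"
    by (metis pCons_split fdp_pow_add poly_add)
  moreover have "poly ((fdp h ^^ j) [:a:]) y = (if j = 0 then a else 0)"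
    by (cases j) (simp_all only: fdp_pow_const, simp_all)
  ultimately show ?thesis by (simp add: leibniz)
qed

lemma annih: "degree p < N \<Longrightarrow> (fdp h ^^ N) p = 0"
proof (induction p arbitrary: N rule: pCons_induct)
  case 0
  then show ?case by (simp add: fdp_pow_zero)
next
  case (pCons a q)
  then obtain N' where N: "N = Suc N'" by (cases N) auto
  have "poly ((fdp h ^^ N) (pCons a q)) y = 0" for y
  proof (cases "q = 0")
    case True
    then show ?thesis using N fdp_pow_const by (metis poly_0)
  next
    case False
    then have "degree q < N'" using pCons.prems N by simp
    then have z: "(fdp h ^^ N') q = 0" using pCons.IH by blast
    have zN: "(fdp h ^^ N) q = 0" using N z by (simp add: fdp_zero)
    have "poly ((fdp h ^^ N) (pCons a q)) y = (if N=0 then a else 0) + y * poly ((fdp h ^^ N) q) y + real N * h * poly ((fdp h ^^ (N - 1)) q) (y + h)"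
      by (rule poly_fdp_pow_pCons)
    then show ?thesis using N z zN by simp
  qed
  then show ?case using poly_all_0_iff_0 by blast
qed

lemma telescope:
  "(\<Sum>i<N. (-1) ^ i * poly ((fdp h ^^ i) q) (y + h)) = poly q y - (-1) ^ N * poly ((fdp h ^^ N) q) y"
proof (induction N)
  case 0 then show ?case by simp
next
  case (Suc N)
  have "poly ((fdp h ^^ N) q) (y + h) = poly ((fdp h ^^ N) q) y + poly ((fdp h ^^ Suc N) q) y"
    by (simp add: poly_fdp)
  then show ?case using Suc by (simp add: algebra_simps)
qed

lemma sum_1_N_shift: "(\<Sum>j=1..N. f j) = (\<Sum>i<N. f (Suc i))"
  by (induction N) (simp_all add: atLeastAtMostSuc_conv add.commute)

lemma deriv_fd:
  "degree p < N \<Longrightarrow> h * poly (pderiv p) y = (\<Sum>j=1..N. (-1) ^ (j + 1) / real j * poly ((fdp h ^^ j) p) y)"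
proof (induction p arbitrary: y rule: pCons_induct)
  case 0
  then show ?case by (simp add: fdp_pow_zero)
next
  case (pCons a q)
  have dq: "degree q < N" using pCons.prems by (auto simp: degree_pCons_eq_if split: if_splits)
  have IH: "h * poly (pderiv q) y = (\<Sum>j=1..N. (-1) ^ (j + 1) / real j * poly ((fdp h ^^ j) q) y)"
    using pCons.IH dq by blast
  have "(\<Sum>j=1..N. (-1) ^ (j + 1) / real j * poly ((fdp h ^^ j) (pCons a q)) y)
      = (\<Sum>j=1..N. y * ((-1) ^ (j + 1) / real j * poly ((fdp h ^^ j) q) y)
                 + h * ((-1) ^ (j + 1) * poly ((fdp h ^^ (j - 1)) q) (y + h)))"
    by (rule sum.cong) (auto simp: poly_fdp_pow_pCons field_simps)
  also have "\<dots> = y * (\<Sum>j=1..N. (-1) ^ (j + 1) / real j * poly ((fdp h ^^ j) q) y)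
      + h * (\<Sum>j=1..N. (-1) ^ (j + 1) * poly ((fdp h ^^ (j - 1)) q) (y + h))"
    by (simp only: sum.distrib sum_distrib_left)
  also have "(\<Sum>j=1..N. (-1) ^ (j + 1) * poly ((fdp h ^^ (j - 1)) q) (y + h))
      = (\<Sum>i<N. (-1) ^ i * poly ((fdp h ^^ i) q) (y + h))"
    unfolding sum_1_N_shift by simp
  also have "\<dots> = poly q y" using telescope[where N=N and h=h and q=q and y=y] annih[OF dq] by simp
  finally show ?case using IH by (simp add: pderiv_pCons algebra_simps)
qed

lemma newton:
  "degree p \<le> N \<Longrightarrow> poly p (y + x * h) = (\<Sum>j\<le>N. (x gchoose j) * poly ((fdp h ^^ j) p) y)"
proof (induction p arbitrary: N x y rule: pCons_induct)
  case 0
  then show ?case by (simp add: fdp_pow_zero)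
next
  case (pCons a q)
  have dq: "degree q \<le> N" using pCons.prems by (auto simp: degree_pCons_eq_if split: if_splits)
  have S1: "(\<Sum>j\<le>N. (x gchoose j) * (y * poly ((fdp h ^^ j) q) y)) = y * poly q (y + x * h)"
    using pCons.IH[OF dq, of y x] by (simp add: sum_distrib_left algebra_simps)
  have S2: "(\<Sum>j\<le>N. (x gchoose j) * (real j * h * poly ((fdp h ^^ (j - 1)) q) (y + h))) = x * h * poly q (y + x * h)"
  proof (cases N)
    case 0
    then have "q = 0" using pCons.prems by (auto simp: degree_pCons_eq_if split: if_splits)
    then show ?thesis using 0 by simp
  next
    case (Suc N')
    have dq': "degree q \<le> N'" using pCons.prems Suc by (auto simp: degree_pCons_eq_if split: if_splits)
    have "(\<Sum>j\<le>N. (x gchoose j) * (real j * h * poly ((fdp h ^^ (j - 1)) q) (y + h)))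
        = (\<Sum>i\<le>N'. (x gchoose Suc i) * (real (Suc i) * h * poly ((fdp h ^^ i) q) (y + h)))"
      using Suc by (simp only: sum.atMost_Suc_shift) simp
    also have "\<dots> = (\<Sum>i\<le>N'. x * h * ((x - 1 gchoose i) * poly ((fdp h ^^ i) q) (y + h)))"
    proof (rule sum.cong)
      fix i
      have "real (Suc i) * (x gchoose Suc i) = x * (x - 1 gchoose i)"
        using gbinomial_absorption[of i x] by simp
      then show "(x gchoose Suc i) * (real (Suc i) * h * poly ((fdp h ^^ i) q) (y + h))
          = x * h * ((x - 1 gchoose i) * poly ((fdp h ^^ i) q) (y + h))"
        by (metis (no_types, lifting) mult.assoc mult.left_commute)
    qed simp
    also have "\<dots> = x * h * poly q (y + h + (x - 1) * h)"
      using pCons.IH[OF dq', of "y + h" "x - 1"] by (simp add: sum_distrib_left)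
    also have "y + h + (x - 1) * h = y + x * h" by (simp add: algebra_simps)
    finally show ?thesis .
  qed
  have "(\<Sum>j\<le>N. (x gchoose j) * poly ((fdp h ^^ j) (pCons a q)) y)
      = (\<Sum>j\<le>N. (x gchoose j) * (if j = 0 then a else 0)) + (\<Sum>j\<le>N. (x gchoose j) * (y * poly ((fdp h ^^ j) q) y))
        + (\<Sum>j\<le>N. (x gchoose j) * (real j * h * poly ((fdp h ^^ (j - 1)) q) (y + h)))"
    by (simp add: poly_fdp_pow_pCons sum.distrib distrib_left)
  also have "(\<Sum>j\<le>N. (x gchoose j) * (if j = 0 then a else 0)) = a"
    by (simp add: if_distrib sum.If_cases)
  finally show ?case using S1 S2 by (simp add: algebra_simps)
qed

lemma expand_sign:
  "(-1) ^ k * poly ((fdp h ^^ k) p) x = (\<Sum>i\<le>k. real (k choose i) * (-1) ^ i * poly p (x + real i * h))"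
proof (induction k arbitrary: x)
  case 0
  then show ?case by simp
next
  case (Suc k)
  define a where "a j = poly p (x + real j * h)" for j
  have ash: "poly p (x + h + real i * h) = a (Suc i)" for i unfolding a_def by (simp add: algebra_simps)
  have L: "(-1) ^ Suc k * poly ((fdp h ^^ Suc k) p) x
      = (\<Sum>i\<le>k. real (k choose i) * (-1) ^ i * a i) - (\<Sum>i\<le>k. real (k choose i) * (-1) ^ i * a (Suc i))"
    using Suc[of x] Suc[of "x + h"] unfolding ash by (simp add: poly_fdp algebra_simps a_def)
  have "(\<Sum>i\<le>Suc k. real (Suc k choose i) * (-1) ^ i * poly p (x + real i * h))
      = a 0 + (\<Sum>i\<le>k. real (Suc k choose Suc i) * (-1) ^ Suc i * a (Suc i))"
    unfolding a_def by (simp only: sum.atMost_Suc_shift) simp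
  also have "(\<Sum>i\<le>k. real (Suc k choose Suc i) * (-1) ^ Suc i * a (Suc i))
      = (\<Sum>i\<le>k. real (k choose Suc i) * (-1) ^ Suc i * a (Suc i) - real (k choose i) * (-1) ^ i * a (Suc i))"
    by (rule sum.cong) (simp_all add: algebra_simps)
  also have "\<dots> = (\<Sum>i\<le>k. real (k choose Suc i) * (-1) ^ Suc i * a (Suc i)) - (\<Sum>i\<le>k. real (k choose i) * (-1) ^ i * a (Suc i))"
    by (rule sum_subtractf)
  also have "a 0 + ((\<Sum>i\<le>k. real (k choose Suc i) * (-1) ^ Suc i * a (Suc i)) - (\<Sum>i\<le>k. real (k choose i) * (-1) ^ i * a (Suc i)))
     = (a 0 + (\<Sum>i\<le>k. real (k choose Suc i) * (-1) ^ Suc i * a (Suc i))) - (\<Sum>i\<le>k. real (k choose i) * (-1) ^ i * a (Suc i))"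
    by simp
  also have "a 0 + (\<Sum>i\<le>k. real (k choose Suc i) * (-1) ^ Suc i * a (Suc i))
      = (\<Sum>i\<le>Suc k. real (k choose i) * (-1) ^ i * a i)"
    by (simp only: sum.atMost_Suc_shift) simp
  also have "\<dots> = (\<Sum>i\<le>k. real (k choose i) * (-1) ^ i * a i)" by simp
  finally show ?case using L by simp
qed

lemma expand:
  "poly ((fdp h ^^ k) p) x = (\<Sum>i\<le>k. real (k choose i) * (-1) ^ (k - i) * poly p (x + real i * h))"
proof -
  have s: "(-1::real) ^ (k - i) = (-1) ^ k * (-1) ^ i" if "i \<le> k" for i
    using that by (cases "even i") (auto simp: power_diff)
  have "poly ((fdp h ^^ k) p) x = (-1) ^ k * ((-1) ^ k * poly ((fdp h ^^ k) p) x)"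
    by (simp flip: mult.assoc power_add)
  also have "\<dots> = (\<Sum>i\<le>k. real (k choose i) * (-1) ^ (k - i) * poly p (x + real i * h))"
    unfolding expand_sign sum_distrib_left by (rule sum.cong) (auto simp: s)
  finally show ?thesis .
qed

lemma refl_fdp:
  "poly ((fdp h ^^ s) (p \<circ>\<^sub>p [:c, -1:])) x = poly ((fdp (-h) ^^ s) p) (c - x)"
proof (induction s arbitrary: x)
  case 0
  then show ?case by (simp add: poly_pcompose)
next
  case (Suc s)
  then show ?case by (simp add: poly_fdp algebra_simps)
qed

lemma antideriv: fixes p :: "real poly" shows "\<exists>P. pderiv P = p \<and> degree P \<le> Suc (degree p)"
proof -
  define P where "P = (\<Sum>i\<le>degree p. monom (coeff p i / real (Suc i)) (Suc i))"
  have "pderiv P = (\<Sum>i\<le>degree p. pderiv (monom (coeff p i / real (Suc i)) (Suc i)))"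
    unfolding P_def using higher_pderiv_sum[of 1] by simp
  also have "\<dots> = (\<Sum>i\<le>degree p. monom (coeff p i) i)"
    by (rule sum.cong) (auto simp: pderiv_monom)
  also have "\<dots> = p" by (rule poly_as_sum_of_monoms)
  finally have "pderiv P = p" .
  moreover have "degree P \<le> Suc (degree p)"
    unfolding P_def by (rule degree_sum_le) (auto intro: order_trans[OF degree_monom_le])
  ultimately show ?thesis by blast
qed

lemma oint_poly:
  assumes "pderiv P = f"
  shows "oriented_integral a b (poly f) = poly P b - poly P a"
proof -
  have d: "((\<lambda>x. poly P x) has_vector_derivative poly f x) (at x within S)" for x S
    using poly_DERIV[of P x] assms
    by (simp add: has_real_derivative_iff_has_vector_derivative[symmetric] has_field_derivative_at_within)
  have i: "integral {u..v} (poly f) = poly P v - poly P u" if "u \<le> v" for u v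
    by (rule integral_unique, rule fundamental_theorem_of_calculus[OF that]) (use d in auto)
  show ?thesis unfolding oriented_integral_def using i by auto
qed

lemma tri_swap: fixes m :: nat and F :: "nat \<Rightarrow> nat \<Rightarrow> 'a::comm_monoid_add" shows "(\<Sum>i=0..m. \<Sum>k=i..m. F i k) = (\<Sum>k=0..m. \<Sum>i=0..k. F i k)"
proof (induction m)
  case 0 then show ?case by simp
next
  case (Suc m)
  have "(\<Sum>i=0..Suc m. \<Sum>k=i..Suc m. F i k) = (\<Sum>i=0..m. \<Sum>k=i..Suc m. F i k) + F (Suc m) (Suc m)"
    by simp
  also have "(\<Sum>i=0..m. \<Sum>k=i..Suc m. F i k) = (\<Sum>i=0..m. (\<Sum>k=i..m. F i k) + F i (Suc m))"
    by (rule sum.cong) auto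
  also have "\<dots> = (\<Sum>i=0..m. \<Sum>k=i..m. F i k) + (\<Sum>i=0..m. F i (Suc m))"
    by (rule sum.distrib)
  finally show ?case using Suc by (simp add: add.assoc)
qed

definition Kpt :: "real \<Rightarrow> nat \<Rightarrow> real poly \<Rightarrow> real \<Rightarrow> real" where
  "Kpt h m P y = (\<Sum>i=0..m. (-1) ^ (i + 1) / real (i + 2) * poly ((fdp h ^^ (i + 1)) P) y)"

lemma stepA:
  fixes h :: real and b :: "nat \<Rightarrow> real" and f :: "real poly"
  shows "(\<Sum>i=0..m. (\<Sum>k=i..m. real (k choose i) * (-1) ^ (k - i) * b k) * poly f (real i * h))
   = (\<Sum>k=0..m. b k * poly ((fdp h ^^ k) f) 0)"
proof -
  have "(\<Sum>i=0..m. (\<Sum>k=i..m. real (k choose i) * (-1) ^ (k - i) * b k) * poly f (real i * h))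
      = (\<Sum>i=0..m. \<Sum>k=i..m. real (k choose i) * (-1) ^ (k - i) * b k * poly f (real i * h))"
    by (simp add: sum_distrib_right)
  also have "\<dots> = (\<Sum>k=0..m. \<Sum>i=0..k. real (k choose i) * (-1) ^ (k - i) * b k * poly f (real i * h))"
    by (rule tri_swap)
  also have "\<dots> = (\<Sum>k=0..m. b k * poly ((fdp h ^^ k) f) 0)"
    by (rule sum.cong) (auto simp: expand[where x=0] sum_distrib_left atLeast0AtMost intro!: sum.cong)
  finally show ?thesis .
qed

lemma inner_B:
  fixes h :: real and P :: "real poly" and m k :: nat
  assumes dP: "degree P \<le> Suc m" and k: "k \<le> m"
  shows "h * poly ((fdp h ^^ k) (pderiv P)) 0
    = (\<Sum>i=k..m. (-1) ^ (i - k) / real (i - k + 1) * poly ((fdp h ^^ (i + 1)) P) 0)"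
proof -
  define X where "X s = poly ((fdp h ^^ s) P) 0" for s
  have X0: "X s = 0" if "s \<ge> m + 2" for s
    unfolding X_def using annih[where p=P and N=s and h=h] dP that by simp
  have "h * poly ((fdp h ^^ k) (pderiv P)) 0 = h * poly (pderiv ((fdp h ^^ k) P)) 0"
    by (simp add: pderiv_fdp_pow)
  also have "\<dots> = (\<Sum>j=1..m+2. (-1) ^ (j + 1) / real j * poly ((fdp h ^^ j) ((fdp h ^^ k) P)) 0)"
    by (rule deriv_fd) (use degree_fdp_pow[where h=h and j=k and p=P] dP in linarith)
  also have "\<dots> = (\<Sum>j=1..m+2. (-1) ^ (j + 1) / real j * X (j + k))"
  proof -
    have fp: "(fdp h ^^ j) ((fdp h ^^ k) P) = (fdp h ^^ (j + k)) P" for j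
      by (simp add: funpow_add)
    show ?thesis by (simp only: fp X_def)
  qed
  also have "\<dots> = (\<Sum>t<m+2. (-1) ^ t / real (t + 1) * X (t + k + 1))"
    unfolding sum_1_N_shift by (rule sum.cong) simp_all
  also have "\<dots> = (\<Sum>t\<in>{0..m-k}. (-1) ^ t / real (t + 1) * X (t + k + 1))"
    by (rule sum.mono_neutral_right) (auto simp: X0)
  also have "\<dots> = (\<Sum>i\<in>{0+k..(m-k)+k}. (-1) ^ (i - k) / real (i - k + 1) * X (i + 1))"
    by (subst sum.shift_bounds_cl_nat_ivl) simp
  also have "{0+k..(m-k)+k} = {k..m}" using k by simp
  finally show ?thesis unfolding X_def .
qed

lemma one:
  assumes sys: "solves_system \<alpha> m b" and dP: "degree P \<le> Suc m"
  shows "h * (\<Sum>i=0..m. (\<Sum>k=i..m. real (k choose i) * (-1) ^ (k - i) * b k) * poly (pderiv P) (real i * h))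
    = Kpt h m P 0 - poly P (- \<alpha> * h) + poly P 0"
proof -
  define X where "X s = poly ((fdp h ^^ s) P) 0" for s
  define l where "l t = (-1) ^ t / real (t + 1)" for t :: nat
  have "h * (\<Sum>i=0..m. (\<Sum>k=i..m. real (k choose i) * (-1) ^ (k - i) * b k) * poly (pderiv P) (real i * h))
      = (\<Sum>k=0..m. b k * (h * poly ((fdp h ^^ k) (pderiv P)) 0))"
    unfolding stepA by (simp add: sum_distrib_left algebra_simps)
  also have "\<dots> = (\<Sum>k=0..m. \<Sum>i=k..m. b k * l (i - k) * X (i + 1))"
    by (rule sum.cong) (auto simp: inner_B[OF dP] sum_distrib_left l_def X_def algebra_simps)
  also have "\<dots> = (\<Sum>i=0..m. \<Sum>k=0..i. b k * l (i - k) * X (i + 1))"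
    by (rule tri_swap)
  also have "\<dots> = (\<Sum>i=0..m. ((-1) ^ (i + 1) / real (i + 2) - ((- \<alpha>) gchoose (i + 1))) * X (i + 1))"
  proof (rule sum.cong)
    fix i assume "i \<in> {0..m}"
    then have "(\<Sum>k=0..i. (-1) ^ (i - k) / real (i - k + 1) * b k) = (-1) ^ (i + 1) / real (i + 2) - ((- \<alpha>) gchoose (i + 1))"
      using sys unfolding solves_system_def by auto
    moreover have "(\<Sum>k=0..i. b k * l (i - k) * X (i + 1)) = (\<Sum>k=0..i. (-1) ^ (i - k) / real (i - k + 1) * b k) * X (i + 1)"
      unfolding sum_distrib_right l_def by (rule sum.cong) (simp_all add: mult_ac)
    ultimately show "(\<Sum>k=0..i. b k * l (i - k) * X (i + 1)) = ((-1) ^ (i + 1) / real (i + 2) - ((- \<alpha>) gchoose (i + 1))) * X (i + 1)"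
      by simp
  qed simp
  also have "\<dots> = Kpt h m P 0 - (\<Sum>i=0..m. ((- \<alpha>) gchoose (i + 1)) * X (i + 1))"
    unfolding Kpt_def X_def by (simp add: algebra_simps sum_subtractf)
  also have "(\<Sum>i=0..m. ((- \<alpha>) gchoose (i + 1)) * X (i + 1)) = poly P (- \<alpha> * h) - poly P 0"
  proof -
    have "poly P (0 + (- \<alpha>) * h) = (\<Sum>j\<le>Suc m. ((- \<alpha>) gchoose j) * X j)"
      unfolding X_def by (rule newton[OF dP])
    also have "\<dots> = X 0 + (\<Sum>i\<le>m. ((- \<alpha>) gchoose (Suc i)) * X (Suc i))"
      by (simp only: sum.atMost_Suc_shift) simp
    finally show ?thesis by (simp add: X_def atLeast0AtMost)
  qed
  finally show ?thesis by simp
qed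

lemma gen_exp:
  fixes P :: "real poly"
  assumes dP: "degree P \<le> Suc m"
  shows "k * poly (pderiv P) z = poly (fdp k P) z
          + (\<Sum>t=0..m. (-1) ^ (t + 1) / real (t + 2) * poly ((fdp k ^^ (t + 2)) P) z)"
proof -
  have "k * poly (pderiv P) z = (\<Sum>j=1..m+2. (-1) ^ (j + 1) / real j * poly ((fdp k ^^ j) P) z)"
    by (rule deriv_fd) (use dP in linarith)
  also have "\<dots> = (\<Sum>t<Suc (Suc m). (-1) ^ (Suc t + 1) / real (Suc t) * poly ((fdp k ^^ Suc t) P) z)"
    unfolding sum_1_N_shift by simp
  also have "\<dots> = poly (fdp k P) z + (\<Sum>t<Suc m. (-1) ^ (Suc (Suc t) + 1) / real (Suc (Suc t)) * poly ((fdp k ^^ Suc (Suc t)) P) z)"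
    by (simp only: sum.lessThan_Suc_shift) simp
  also have "(\<Sum>t<Suc m. (-1) ^ (Suc (Suc t) + 1) / real (Suc (Suc t)) * poly ((fdp k ^^ Suc (Suc t)) P) z)
      = (\<Sum>t=0..m. (-1) ^ (t + 1) / real (t + 2) * poly ((fdp k ^^ (t + 2)) P) z)"
    unfolding lessThan_Suc_atMost atLeast0AtMost[symmetric] by (rule sum.cong) simp_all
  finally show ?thesis .
qed

lemma kq:
  fixes Q P :: "real poly"
  assumes QP: "fdp k Q = P" and dQ: "degree Q \<le> m + 2"
  shows "k * poly (pderiv Q) y = poly P y + Kpt k m P y"
proof -
  have "k * poly (pderiv Q) y = poly (fdp k Q) y
      + (\<Sum>t=0..Suc m. (-1) ^ (t + 1) / real (t + 2) * poly ((fdp k ^^ (t + 2)) Q) y)"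
    by (rule gen_exp) (use dQ in simp)
  moreover have z: "(fdp k ^^ (Suc m + 2)) Q = 0"
    by (rule annih) (use dQ in simp)
  moreover have fp: "(fdp k ^^ (t + 2)) Q = (fdp k ^^ (t + 1)) P" for t
    using QP by (simp add: funpow_Suc_right del: funpow.simps)
  ultimately show ?thesis using QP unfolding Kpt_def
    by (simp only: sum.atLeast0_atMost_Suc fp z) simp
qed

lemma step:
  fixes P :: "real poly"
  assumes dP: "degree P \<le> Suc m"
  shows "poly P (y + h) - poly P y = h * poly (pderiv P) (y + h) - Kpt (-h) m P (y + h) + Kpt (-h) m P y"
proof -
  have g: "(-h) * poly (pderiv P) (y + h) = poly (fdp (-h) P) (y + h)
          + (\<Sum>t=0..m. (-1) ^ (t + 1) / real (t + 2) * poly ((fdp (-h) ^^ (t + 2)) P) (y + h))"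
    by (rule gen_exp[OF dP])
  have "Kpt (-h) m P y - Kpt (-h) m P (y + h)
     = (\<Sum>t=0..m. (-1) ^ (t + 1) / real (t + 2) * poly ((fdp (-h) ^^ (t + 2)) P) (y + h))"
    unfolding Kpt_def sum_subtractf[symmetric]
    by (rule sum.cong) (simp_all add: poly_fdp algebra_simps)
  then show ?thesis using g by (simp add: poly_fdp algebra_simps)
qed

lemma fdp_sum: "fdp h (sum f A) = (\<Sum>x\<in>A. fdp h (f x))"
  using fdp_pow_sum[where j=1] by simp

lemma base:
  fixes P :: "real poly"
  assumes dP: "degree P \<le> Suc m" and h: "h \<noteq> 0"
  shows "Kpt (-h) m P 0 - Kpt h m P 0 = h * poly (pderiv P) 0"
proof -
  obtain I where I: "pderiv I = P" "degree I \<le> Suc (degree P)" using antideriv by blast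
  define Q where "Q = smult (1/h) (\<Sum>j<m+3. smult ((-1) ^ j / real (j + 1)) ((fdp h ^^ j) I))"
  have "poly (fdp h Q) x = poly P x" for x
  proof -
    have "h * poly P x = (\<Sum>j=1..m+3. (-1) ^ (j + 1) / real j * poly ((fdp h ^^ j) I) x)"
      using deriv_fd[of I "m+3" h x] I dP by simp
    also have "\<dots> = (\<Sum>j<m+3. (-1) ^ j / real (j + 1) * poly ((fdp h ^^ Suc j) I) x)"
      unfolding sum_1_N_shift by simp
    finally have e: "h * poly P x = \<dots>" .
    have "poly (fdp h Q) x = (1/h) * (\<Sum>j<m+3. (-1) ^ j / real (j + 1) * poly ((fdp h ^^ Suc j) I) x)"
      unfolding Q_def fdp_smult fdp_sum by (simp add: poly_sum)
    also have "\<dots> = (1/h) * (h * poly P x)" by (simp only: e)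
    also have "\<dots> = poly P x" using h by simp
    finally show ?thesis .
  qed
  then have QP: "fdp h Q = P" using poly_eq_poly_eq_iff by blast
  have dQ: "degree Q \<le> m + 2"
  proof -
    have "degree (\<Sum>j<m+3. smult ((-1) ^ j / real (j + 1)) ((fdp h ^^ j) I)) \<le> m + 2"
    proof (rule degree_sum_le)
      fix j
      have "degree ((fdp h ^^ j) I) \<le> m + 2"
        using degree_fdp_pow[where h=h and j=j and p=I] I(2) dP by linarith
      then show "degree (smult ((-1) ^ j / real (j + 1)) ((fdp h ^^ j) I)) \<le> m + 2"
        using degree_smult_le order_trans by blast
    qed simp
    then show ?thesis unfolding Q_def using degree_smult_le order_trans by blast
  qed
  define Q2 where "Q2 = - (Q \<circ>\<^sub>p [:h, 1:])"
  have "poly (fdp (-h) Q2) x = poly P x" for x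
    unfolding QP[symmetric] Q2_def by (simp add: poly_fdp poly_pcompose algebra_simps)
  then have Q2P: "fdp (-h) Q2 = P" using poly_eq_poly_eq_iff by blast
  have dQ2: "degree Q2 \<le> m + 2" unfolding Q2_def using dQ by (simp add: degree_pcompose)
  have k1: "h * poly (pderiv Q) 0 = poly P 0 + Kpt h m P 0" by (rule kq[OF QP dQ])
  have k2: "(-h) * poly (pderiv Q2) 0 = poly P 0 + Kpt (-h) m P 0" by (rule kq[OF Q2P dQ2])
  have d2: "poly (pderiv Q2) 0 = - poly (pderiv Q) h"
    unfolding Q2_def by (simp add: pderiv_minus pderiv_pcompose pderiv_pCons poly_pcompose)
  have dp: "poly (pderiv P) 0 = poly (pderiv Q) h - poly (pderiv Q) 0"
    unfolding QP[symmetric] pderiv_fdp by (simp add: poly_fdp)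
  have e: "h * poly (pderiv Q) h = h * poly (pderiv P) 0 + h * poly (pderiv Q) 0"
    unfolding dp by (simp add: algebra_simps)
  have k2': "h * poly (pderiv Q) h = poly P 0 + Kpt (-h) m P 0" using k2 d2 by simp
  show ?thesis using k1 k2' e by linarith
qed

lemma greg:
  fixes P :: "real poly"
  assumes dP: "degree P \<le> Suc m" and h: "h \<noteq> 0"
  shows "poly P (real n * h) - poly P 0
     = h * (\<Sum>i=0..n. poly (pderiv P) (real i * h)) + Kpt h m P 0 - Kpt (-h) m P (real n * h)"
proof (induction n)
  case 0
  then show ?case using base[OF dP h] by simp
next
  case (Suc n)
  have "poly P (real n * h + h) - poly P (real n * h)
     = h * poly (pderiv P) (real n * h + h) - Kpt (-h) m P (real n * h + h) + Kpt (-h) m P (real n * h)"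
    by (rule step[OF dP])
  moreover have "real (Suc n) * h = real n * h + h" by (simp add: algebra_simps)
  ultimately show ?case using Suc by (simp add: algebra_simps)
qed

theorem mainTheorem1:
  fixes \<alpha> \<beta> :: real and m :: nat and b b' :: "nat \<Rightarrow> real"
  assumes hb: "solves_system \<alpha> m b"
      and hb': "solves_system \<beta> m b'"
  defines "c \<equiv> (\<lambda>i. \<Sum>k=i..m. real (k choose i) * (-1) ^ (k - i) * b k)"
      and "d \<equiv> (\<lambda>i. \<Sum>k=i..m. real (k choose i) * (-1) ^ (k - i) * b' k)"
  shows "\<forall>(n::nat) (h::real) (f::real poly). h > 0 \<longrightarrow> degree f \<le> m \<longrightarrow>
           oriented_integral (- \<alpha> * h) ((real n + \<beta>) * h) (poly f)
           = h * (\<Sum>i=0..n. poly f (real i * h))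
             + h * (\<Sum>i=0..m. c i * poly f (real i * h))
             + h * (\<Sum>i=0..m. d i * poly f ((real n - real i) * h))"
proof (intro allI impI)
  fix n :: nat and h :: real and f :: "real poly"
  assume h: "h > 0" and df: "degree f \<le> m"
  obtain P where P: "pderiv P = f" "degree P \<le> Suc (degree f)" using antideriv by blast
  have dP: "degree P \<le> Suc m" using P(2) df by linarith
  have lhs: "oriented_integral (- \<alpha> * h) ((real n + \<beta>) * h) (poly f)
      = poly P ((real n + \<beta>) * h) - poly P (- \<alpha> * h)"
    by (rule oint_poly[OF P(1)])
  have e1: "h * (\<Sum>i=0..m. c i * poly f (real i * h)) = Kpt h m P 0 - poly P (- \<alpha> * h) + poly P 0"
    using one[OF hb dP, of h] unfolding c_def P(1) by simp
  define Ph where "Ph = - (P \<circ>\<^sub>p [:real n * h, -1:])"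
  have dPh: "degree Ph \<le> Suc m" unfolding Ph_def using dP by (simp add: degree_pcompose)
  have pdPh: "poly (pderiv Ph) x = poly f (real n * h - x)" for x
    unfolding Ph_def P(1)[symmetric]
    by (simp add: pderiv_minus pderiv_pcompose pderiv_pCons poly_pcompose algebra_simps)
  have e2': "h * (\<Sum>i=0..m. d i * poly (pderiv Ph) (real i * h)) = Kpt h m Ph 0 - poly Ph (- \<beta> * h) + poly Ph 0"
    using one[OF hb' dPh, of h] unfolding d_def by simp
  have "(\<Sum>i=0..m. d i * poly (pderiv Ph) (real i * h)) = (\<Sum>i=0..m. d i * poly f ((real n - real i) * h))"
    by (rule sum.cong) (simp_all add: pdPh algebra_simps)
  then have e2: "h * (\<Sum>i=0..m. d i * poly f ((real n - real i) * h)) = Kpt h m Ph 0 - poly Ph (- \<beta> * h) + poly Ph 0"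
    using e2' by simp
  have kph: "Kpt h m Ph 0 = - Kpt (-h) m P (real n * h)"
    unfolding Kpt_def Ph_def fdp_pow_minus poly_minus refl_fdp by (simp add: sum_negf)
  have ph1: "poly Ph (- \<beta> * h) = - poly P ((real n + \<beta>) * h)"
    unfolding Ph_def by (simp add: poly_pcompose algebra_simps)
  have ph0: "poly Ph 0 = - poly P (real n * h)"
    unfolding Ph_def by (simp add: poly_pcompose)
  have g: "poly P (real n * h) - poly P 0
     = h * (\<Sum>i=0..n. poly f (real i * h)) + Kpt h m P 0 - Kpt (-h) m P (real n * h)"
    using greg[OF dP, of h n] h P(1) by simp
  show "oriented_integral (- \<alpha> * h) ((real n + \<beta>) * h) (poly f)
           = h * (\<Sum>i=0..n. poly f (real i * h))
             + h * (\<Sum>i=0..m. c i * poly f (real i * h))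
             + h * (\<Sum>i=0..m. d i * poly f ((real n - real i) * h))"
    using lhs e1 e2 kph ph1 ph0 g by linarith
qed

end
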